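(* Let $u\ge1$ be an integer, $H$ a graph containing $K_u$, and $\mathcal{F}$ a set of connected graphs none of which is a subgraph of $K_u$. Suppose there is an $\mathcal{F}$-free graph $L$ with $k^u(L)\ge1$, $\mathcal{N}(H,L)\ge1$, and $\rho_u(H,L)=P_u(H,\mathcal{F})$. For each $p\ge1$ write $p=q\,k^u(L)+r$ with integers $q\ge0$, $0\le r<k^u(L)$. Then \[ \lim_{p\to\infty}\frac{\mathrm{ex}_u(p,H,\mathcal{F})}{\mathcal{N}(H,qL\cup rK_u)}=1\quad\text{and}\quad \lim_{p\to\infty}\frac{\mathrm{ex}_u(p,H,\mathcal{F})}{\frac{\mathcal{N}(H,L)}{k^u(L)}\,p}=1 . \] Moreover, whenever $k^u(L)$ divides $p$, $\mathrm{ex}_u(p,H,\mathcal{F})=\mathcal{N}\big(H,\frac{p}{k^u(L)}L\big)$.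
   Context: All graphs are finite and simple. $\mathcal{N}(H,G)$ is the number of (not necessarily induced) subgraphs of $G$ isomorphic to $H$; $k^u(G)=\mathcal{N}(K_u,G)$. A graph is $\mathcal{F}$-free if it has no subgraph isomorphic to a member of $\mathcal{F}$. $\mathrm{ex}_u(p,H,\mathcal{F})\in[0,\infty]$ is the supremum of $\mathcal{N}(H,G)$ over all $\mathcal{F}$-free graphs $G$ with $k^u(G)=p$. $\rho_u(H,G)=\mathcal{N}(H,G)/k^u(G)$. $P_u(H,\mathcal{F})=\lim_{p\to\infty}\mathrm{ex}_u(p,H,\mathcal{F})/p$ (this limit exists in $[0,\infty]$ under the stated hypotheses). $qL\cup rK_u$ denotes the disjoint union of $q$ copies of $L$ and $r$ copies of $K_u$. *)

theory Defs
  imports "HOL-Analysis.Analysis" "HOL-Library.Extended_Nat" "HOL-Library.Extended_Real"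
begin

text \<open>Finite simple graphs with vertices in nat: a pair (V, E) of a vertex set and a set
  of 2-element edges contained in V.\<close>
type_synonym graph = "nat set \<times> nat set set"

definition wf_graph :: "graph \<Rightarrow> bool" where
  "wf_graph G \<longleftrightarrow> finite (fst G) \<and> (\<forall>e\<in>snd G. e \<subseteq> fst G \<and> card e = 2)"

definition subgraph :: "graph \<Rightarrow> graph \<Rightarrow> bool" where
  "subgraph S G \<longleftrightarrow> wf_graph S \<and> fst S \<subseteq> fst G \<and> snd S \<subseteq> snd G"

definition graph_iso :: "graph \<Rightarrow> graph \<Rightarrow> bool" where
  "graph_iso G1 G2 \<longleftrightarrow> (\<exists>f. bij_betw f (fst G1) (fst G2) \<and>
     (\<forall>x\<in>fst G1. \<forall>y\<in>fst G1. {x, y} \<in> snd G1 \<longleftrightarrow> {f x, f y} \<in> snd G2))"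

text \<open>N(H,G): number of (not necessarily induced) subgraphs of G isomorphic to H.\<close>
definition numsub :: "graph \<Rightarrow> graph \<Rightarrow> nat" where
  "numsub H G = card {S. subgraph S G \<and> graph_iso S H}"

definition complete :: "nat \<Rightarrow> graph" where
  "complete u = ({0..<u}, {e. e \<subseteq> {0..<u} \<and> card e = 2})"

definition kcount :: "nat \<Rightarrow> graph \<Rightarrow> nat" where
  "kcount u G = numsub (complete u) G"

definition rho :: "nat \<Rightarrow> graph \<Rightarrow> graph \<Rightarrow> real" where
  "rho u H G = real (numsub H G) / real (kcount u G)"

definition free :: "graph set \<Rightarrow> graph \<Rightarrow> bool" where
  "free \<F> G \<longleftrightarrow> (\<forall>F\<in>\<F>. numsub F G = 0)"

definition connected_graph :: "graph \<Rightarrow> bool" where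
  "connected_graph G \<longleftrightarrow> wf_graph G \<and> fst G \<noteq> {} \<and>
     (\<forall>x\<in>fst G. \<forall>y\<in>fst G. (\<lambda>a b. {a, b} \<in> snd G)\<^sup>*\<^sup>* x y)"

text \<open>ex_u(p,H,F) in [0,\<infinity>]: supremum over F-free graphs G with k^u(G) = p (Sup {} = 0).
  Every finite graph is isomorphic to one on nat vertices, so ranging over graphs on nat
  loses nothing.\<close>
definition ex_u :: "nat \<Rightarrow> nat \<Rightarrow> graph \<Rightarrow> graph set \<Rightarrow> enat" where
  "ex_u u p H \<F> = Sup {enat (numsub H G) | G. wf_graph G \<and> free \<F> G \<and> kcount u G = p}"

definition P_u :: "nat \<Rightarrow> graph \<Rightarrow> graph set \<Rightarrow> ereal" where
  "P_u u H \<F> = lim (\<lambda>p. ereal_of_enat (ex_u u p H \<F>) / ereal (real p))"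

definition gmap :: "(nat \<Rightarrow> nat) \<Rightarrow> graph \<Rightarrow> graph" where
  "gmap f G = (f ` fst G, (\<lambda>e. f ` e) ` snd G)"

definition gunion :: "graph \<Rightarrow> graph \<Rightarrow> graph" where
  "gunion G1 G2 = (let A = gmap (\<lambda>v. 2 * v) G1; B = gmap (\<lambda>v. 2 * v + 1) G2
                   in (fst A \<union> fst B, snd A \<union> snd B))"

primrec copies :: "nat \<Rightarrow> graph \<Rightarrow> graph" where
  "copies 0 G = ({}, {})"
| "copies (Suc q) G = gunion G (copies q G)"

definition mixed :: "nat \<Rightarrow> graph \<Rightarrow> nat \<Rightarrow> nat \<Rightarrow> graph" where
  "mixed q L r u = gunion (copies q L) (copies r (complete u))"

end

theory Submission
  imports Defs
begin


definition sh :: "nat \<Rightarrow> nat \<Rightarrow> nat" where "sh c v = 2 * v + c"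

lemma inj_sh: "inj (sh c)" by (auto simp: inj_def sh_def)

lemma gunion_alt: "gunion G1 G2 = (fst (gmap (sh 0) G1) \<union> fst (gmap (sh 1) G2), snd (gmap (sh 0) G1) \<union> snd (gmap (sh 1) G2))"
proof -
  have a: "sh 0 = (\<lambda>v. 2 * v)" "sh 1 = (\<lambda>v. 2 * v + 1)" by (auto simp: sh_def)
  show ?thesis unfolding a by (simp add: gunion_def Let_def)
qed

lemma wf_gmap: "inj h \<Longrightarrow> wf_graph G \<Longrightarrow> wf_graph (gmap h G)"
  unfolding wf_graph_def gmap_def
  by (auto simp: card_image inj_on_subset)

lemma wf_gunion: "wf_graph G1 \<Longrightarrow> wf_graph G2 \<Longrightarrow> wf_graph (gunion G1 G2)"
  using wf_gmap[OF inj_sh, of G1 0] wf_gmap[OF inj_sh, of G2 1]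
  unfolding gunion_alt wf_graph_def by auto

lemma finite_subgraphs: "wf_graph G \<Longrightarrow> finite {S. subgraph S G}"
proof -
  assume w: "wf_graph G"
  have "finite (snd G)" using w unfolding wf_graph_def
    by (meson Pow_iff finite_Pow_iff rev_finite_subset subsetI)
  hence "finite (Pow (fst G) \<times> Pow (snd G))" using w by (auto simp: wf_graph_def)
  moreover have "{S. subgraph S G} \<subseteq> Pow (fst G) \<times> Pow (snd G)"
    by (auto simp: subgraph_def)
  ultimately show ?thesis by (rule rev_finite_subset)
qed

lemma finite_numsub_set: "wf_graph G \<Longrightarrow> finite {S. subgraph S G \<and> graph_iso S H}"
  by (rule rev_finite_subset[OF finite_subgraphs]) auto

lemma gmap_inj: "inj h \<Longrightarrow> inj (gmap h)"
proof (rule injI)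
  fix S T assume h: "inj h" and e: "gmap h S = gmap h T"
  have "fst S = fst T" using e h unfolding gmap_def by (simp add: inj_image_eq_iff)
  moreover have "inj (image h)" using h by (simp add: inj_def inj_image_eq_iff)
  hence "snd S = snd T" using e unfolding gmap_def by (simp add: inj_image_eq_iff)
  ultimately show "S = T" by (simp add: prod_eq_iff)
qed

lemma edge_img: assumes h: "inj h" shows "({h x, h y} \<in> image h ` E) = ({x,y} \<in> E)"
proof -
  have i: "inj (image h)" using h by (simp add: inj_def inj_image_eq_iff)
  have "{h x, h y} = h ` {x,y}" by simp
  thus ?thesis using inj_image_mem_iff[OF i] by metis
qed

lemma iso_gmap: assumes h: "inj h" shows "graph_iso (gmap h S) F \<longleftrightarrow> graph_iso S F"
proof
  assume "graph_iso (gmap h S) F"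
  then obtain f where b: "bij_betw f (h ` fst S) (fst F)" and
    e: "\<forall>x\<in>h ` fst S. \<forall>y\<in>h ` fst S. {x, y} \<in> image h ` snd S \<longleftrightarrow> {f x, f y} \<in> snd F"
    unfolding graph_iso_def gmap_def fst_conv snd_conv by blast
  have b2: "bij_betw (f \<circ> h) (fst S) (fst F)"
    using bij_betw_trans[OF bij_betw_imageI[of h "fst S" "h ` fst S"] b] h by (simp add: inj_on_subset)
  have "\<forall>x\<in>fst S. \<forall>y\<in>fst S. {x, y} \<in> snd S \<longleftrightarrow> {(f\<circ>h) x, (f\<circ>h) y} \<in> snd F"
  proof (intro ballI)
    fix x y assume xy: "x \<in> fst S" "y \<in> fst S"
    have "{h x, h y} \<in> image h ` snd S \<longleftrightarrow> {x, y} \<in> snd S" by (rule edge_img[OF h])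
    moreover have "h x \<in> h ` fst S" "h y \<in> h ` fst S" using xy by auto
    ultimately show "{x, y} \<in> snd S \<longleftrightarrow> {(f\<circ>h) x, (f\<circ>h) y} \<in> snd F" using e by simp
  qed
  thus "graph_iso S F" using b2 unfolding graph_iso_def by blast
next
  assume "graph_iso S F"
  then obtain f where b: "bij_betw f (fst S) (fst F)" and
    e: "\<forall>x\<in>fst S. \<forall>y\<in>fst S. {x, y} \<in> snd S \<longleftrightarrow> {f x, f y} \<in> snd F"
    unfolding graph_iso_def by blast
  have bi: "bij_betw (inv h) (h ` fst S) (fst S)"
  proof -
    have "inj_on (inv h) (h ` fst S)" by (rule inj_onI) (auto simp: inv_f_f[OF h])
    thus ?thesis using h by (simp add: bij_betw_def image_inv_f_f)
  qed
  have b2: "bij_betw (f \<circ> inv h) (h ` fst S) (fst F)"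
    using bij_betw_trans[OF bi b] .
  have "\<forall>x\<in>h ` fst S. \<forall>y\<in>h ` fst S. {x, y} \<in> image h ` snd S \<longleftrightarrow> {(f\<circ>inv h) x, (f\<circ>inv h) y} \<in> snd F"
  proof (intro ballI)
    fix x y assume xy: "x \<in> h ` fst S" "y \<in> h ` fst S"
    then obtain a b where ab: "a \<in> fst S" "b \<in> fst S" "x = h a" "y = h b" by blast
    have "{h a, h b} \<in> image h ` snd S \<longleftrightarrow> {a, b} \<in> snd S" by (rule edge_img[OF h])
    moreover have "inv h x = a" "inv h y = b" using ab h by (simp_all add: inv_f_f)
    ultimately show "{x, y} \<in> image h ` snd S \<longleftrightarrow> {(f\<circ>inv h) x, (f\<circ>inv h) y} \<in> snd F"
      using e ab by simp
  qed
  thus "graph_iso (gmap h S) F" using b2 unfolding graph_iso_def gmap_def fst_conv snd_conv by blast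
qed

lemma iso_nonempty: "graph_iso S F \<Longrightarrow> fst F \<noteq> {} \<Longrightarrow> fst S \<noteq> {}"
  unfolding graph_iso_def by (auto simp: bij_betw_def)

lemma subgraph_gmap: "inj h \<Longrightarrow> subgraph S G \<Longrightarrow> subgraph (gmap h S) (gmap h G)"
  unfolding subgraph_def using wf_gmap[of h S] by (auto simp: gmap_def)

lemma subgraph_gunion1: "subgraph S (gmap (sh 0) G1) \<Longrightarrow> subgraph S (gunion G1 G2)"
  unfolding subgraph_def gunion_alt by auto
lemma subgraph_gunion2: "subgraph S (gmap (sh 1) G2) \<Longrightarrow> subgraph S (gunion G1 G2)"
  unfolding subgraph_def gunion_alt by auto


lemma pull:
  assumes h: "inj h" and G: "wf_graph G" and S: "wf_graph S"
    and v: "fst S \<subseteq> h ` fst G" and ed: "snd S \<subseteq> image h ` snd G"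
  shows "S = gmap h (gmap (inv h) S) \<and> subgraph (gmap (inv h) S) G"
proof
  have c: "\<And>A. A \<subseteq> range h \<Longrightarrow> h ` inv h ` A = A"
  proof -
    fix A assume A: "A \<subseteq> range h"
    have "\<And>x. x \<in> A \<Longrightarrow> h (inv h x) = x" using A by (meson f_inv_into_f subsetD)
    thus "h ` inv h ` A = A" by (simp add: image_image)
  qed
  have "fst S \<subseteq> range h" using v by auto
  hence 1: "h ` inv h ` fst S = fst S" by (rule c)
  have "\<And>e. e \<in> snd S \<Longrightarrow> h ` inv h ` e = e"
    using S v unfolding wf_graph_def by (intro c) blast
  hence 2: "image h ` image (inv h) ` snd S = snd S"
    by (simp add: image_image)
  show "S = gmap h (gmap (inv h) S)" unfolding gmap_def using 1 2 by (simp add: prod_eq_iff)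
  show "subgraph (gmap (inv h) S) G"
    unfolding subgraph_def wf_graph_def gmap_def fst_conv snd_conv
  proof (intro conjI ballI)
    show "finite (inv h ` fst S)" using S by (simp add: wf_graph_def)
    show "inv h ` fst S \<subseteq> fst G" using v by (auto simp: inv_f_f[OF h])
    show "image (inv h) ` snd S \<subseteq> snd G" using ed by (auto simp: image_inv_f_f[OF h])
  next
    fix e assume "e \<in> image (inv h) ` snd S"
    then obtain e0 where e0: "e0 \<in> snd S" "e = inv h ` e0" by auto
    then obtain e1 where e1: "e1 \<in> snd G" "e0 = h ` e1" using ed by auto
    have "e = e1" using e0 e1 by (simp add: image_inv_f_f[OF h])
    thus "card e = 2" using e1 G by (simp add: wf_graph_def)
    show "e \<subseteq> inv h ` fst S" using e0 S by (auto simp: wf_graph_def)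
  qed
qed

abbreviation adj :: "graph \<Rightarrow> nat \<Rightarrow> nat \<Rightarrow> bool" where "adj G \<equiv> (\<lambda>a b. {a, b} \<in> snd G)"

lemma conn_iso:
  assumes iso: "graph_iso S F" and C: "connected_graph F" and x: "x \<in> fst S" and y: "y \<in> fst S"
  shows "(adj S)\<^sup>*\<^sup>* x y"
proof -
  obtain f where b: "bij_betw f (fst S) (fst F)" and
    e: "\<forall>x\<in>fst S. \<forall>y\<in>fst S. {x, y} \<in> snd S \<longleftrightarrow> {f x, f y} \<in> snd F"
    using iso unfolding graph_iso_def by blast
  define g where "g = inv_into (fst S) f"
  have gb: "bij_betw g (fst F) (fst S)" unfolding g_def by (rule bij_betw_inv_into[OF b])
  have fg: "\<And>a. a \<in> fst F \<Longrightarrow> f (g a) = a" unfolding g_def using b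
    by (simp add: bij_betw_def f_inv_into_f)
  have gf: "\<And>a. a \<in> fst S \<Longrightarrow> g (f a) = a" unfolding g_def using b
    by (simp add: bij_betw_def inv_into_f_f)
  have wF: "wf_graph F" using C by (simp add: connected_graph_def)
  have step: "(adj F)\<^sup>*\<^sup>* a c \<Longrightarrow> a \<in> fst F \<Longrightarrow> c \<in> fst F \<and> (adj S)\<^sup>*\<^sup>* (g a) (g c)" for a c
  proof (induction rule: rtranclp_induct)
    case base thus ?case by simp
  next
    case (step b c)
    have bF: "b \<in> fst F" and IH: "(adj S)\<^sup>*\<^sup>* (g a) (g b)" using step by auto
    have "c \<in> fst F" using step(2) wF unfolding wf_graph_def by blast
    moreover have "{g b, g c} \<in> snd S"
    proof -
      have "g b \<in> fst S" "g c \<in> fst S" using gb bF \<open>c \<in> fst F\<close> by (auto simp: bij_betw_def)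
      moreover have "{f (g b), f (g c)} \<in> snd F" using fg bF \<open>c \<in> fst F\<close> step(2) by simp
      ultimately show ?thesis using e by blast
    qed
    ultimately show ?case using IH by (meson rtranclp.rtrancl_into_rtrancl)
  qed
  have "f x \<in> fst F" "f y \<in> fst F" using b x y by (auto simp: bij_betw_def)
  hence "(adj F)\<^sup>*\<^sup>* (f x) (f y)" using C by (simp add: connected_graph_def)
  hence "(adj S)\<^sup>*\<^sup>* (g (f x)) (g (f y))" using step \<open>f x \<in> fst F\<close> by blast
  thus ?thesis using gf x y by simp
qed

lemma parity:
  assumes "(adj S)\<^sup>*\<^sup>* x y" and sub: "snd S \<subseteq> snd (gunion G1 G2)"
  shows "even x = even y"
  using assms(1)
proof (induction rule: rtranclp_induct)
  case base thus ?case by simp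
next
  case (step b c)
  have "{b, c} \<in> snd (gmap (sh 0) G1) \<or> {b, c} \<in> snd (gmap (sh 1) G2)"
    using step(2) sub unfolding gunion_alt by auto
  hence "even b = even c"
  proof
    assume "{b, c} \<in> snd (gmap (sh 0) G1)"
    then obtain e where "{b,c} = sh 0 ` e" by (auto simp: gmap_def)
    hence "b \<in> sh 0 ` e" "c \<in> sh 0 ` e" by (metis insertI1 insert_commute)+
    thus ?thesis by (auto simp: sh_def)
  next
    assume "{b, c} \<in> snd (gmap (sh 1) G2)"
    then obtain e where "{b,c} = sh 1 ` e" by (auto simp: gmap_def)
    hence "b \<in> sh 1 ` e" "c \<in> sh 1 ` e" by (metis insertI1 insert_commute)+
    thus ?thesis by (auto simp: sh_def)
  qed
  thus ?case using step by simp
qed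


lemma side:
  assumes G1: "wf_graph G1" and G2: "wf_graph G2" and sub: "subgraph S (gunion G1 G2)"
    and iso: "graph_iso S F" and C: "connected_graph F"
  shows "(\<exists>S'. subgraph S' G1 \<and> graph_iso S' F \<and> S = gmap (sh 0) S') \<or>
         (\<exists>S'. subgraph S' G2 \<and> graph_iso S' F \<and> S = gmap (sh 1) S')"
proof -
  have "fst S \<noteq> {}" using iso_nonempty[OF iso] C by (simp add: connected_graph_def)
  then obtain x0 where x0: "x0 \<in> fst S" by auto
  have par: "\<And>y. y \<in> fst S \<Longrightarrow> even y = even x0"
  proof -
    fix y assume y: "y \<in> fst S"
    have "snd S \<subseteq> snd (gunion G1 G2)" using sub by (simp add: subgraph_def)
    thus "even y = even x0" using parity[OF conn_iso[OF iso C x0 y]] by simp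
  qed
  have wS: "wf_graph S" using sub by (simp add: subgraph_def)
  have vS: "fst S \<subseteq> fst (gmap (sh 0) G1) \<union> fst (gmap (sh 1) G2)"
   and eS: "snd S \<subseteq> snd (gmap (sh 0) G1) \<union> snd (gmap (sh 1) G2)"
    using sub unfolding subgraph_def gunion_alt by auto
  have ne: "\<And>e. e \<in> snd S \<Longrightarrow> \<exists>z. z \<in> e \<and> z \<in> fst S"
  proof -
    fix e assume e: "e \<in> snd S"
    hence "card e = 2" "e \<subseteq> fst S" using wS by (auto simp: wf_graph_def)
    thus "\<exists>z. z \<in> e \<and> z \<in> fst S" by (metis card.empty ex_in_conv subsetD zero_neq_numeral)
  qed
  show ?thesis
  proof (cases "even x0")
    case True
    have v: "fst S \<subseteq> sh 0 ` fst G1"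
    proof
      fix y assume y: "y \<in> fst S"
      hence "even y" using par True by simp
      thus "y \<in> sh 0 ` fst G1" using vS y by (auto simp: gmap_def sh_def)
    qed
    have ed: "snd S \<subseteq> image (sh 0) ` snd G1"
    proof
      fix e assume e: "e \<in> snd S"
      then obtain z where z: "z \<in> e" "z \<in> fst S" using ne by blast
      have "even z" using par True z by simp
      show "e \<in> image (sh 0) ` snd G1"
      proof (rule ccontr)
        assume "e \<notin> image (sh 0) ` snd G1"
        hence "e \<in> image (sh 1) ` snd G2" using eS e by (auto simp: gmap_def)
        then obtain e2 where "e = sh 1 ` e2" by auto
        thus False using z \<open>even z\<close> by (auto simp: sh_def)
      qed
    qed
    from pull[OF inj_sh G1 wS v ed] iso iso_gmap[OF inj_sh]
    show ?thesis by metis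
  next
    case False
    have v: "fst S \<subseteq> sh 1 ` fst G2"
    proof
      fix y assume y: "y \<in> fst S"
      hence "odd y" using par False by simp
      thus "y \<in> sh 1 ` fst G2" using vS y by (auto simp: gmap_def sh_def)
    qed
    have ed: "snd S \<subseteq> image (sh 1) ` snd G2"
    proof
      fix e assume e: "e \<in> snd S"
      then obtain z where z: "z \<in> e" "z \<in> fst S" using ne by blast
      have "odd z" using par False z by simp
      show "e \<in> image (sh 1) ` snd G2"
      proof (rule ccontr)
        assume "e \<notin> image (sh 1) ` snd G2"
        hence "e \<in> image (sh 0) ` snd G1" using eS e by (auto simp: gmap_def)
        then obtain e2 where "e = sh 0 ` e2" by auto
        thus False using z \<open>odd z\<close> by (auto simp: sh_def)
      qed
    qed
    from pull[OF inj_sh G2 wS v ed] iso iso_gmap[OF inj_sh]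
    show ?thesis by metis
  qed
qed

lemma numsub_union_ge:
  assumes G1: "wf_graph G1" and G2: "wf_graph G2" and Hn: "fst H \<noteq> {}"
  shows "numsub H G1 + numsub H G2 \<le> numsub H (gunion G1 G2)"
proof -
  define X where "X = (\<lambda>G. {S. subgraph S G \<and> graph_iso S H})"
  have fin: "finite (X (gunion G1 G2))" unfolding X_def
    by (rule finite_numsub_set[OF wf_gunion[OF G1 G2]])
  have s1: "gmap (sh 0) ` X G1 \<subseteq> X (gunion G1 G2)"
    unfolding X_def using subgraph_gunion1 subgraph_gmap[OF inj_sh] iso_gmap[OF inj_sh] by blast
  have s2: "gmap (sh 1) ` X G2 \<subseteq> X (gunion G1 G2)"
    unfolding X_def using subgraph_gunion2 subgraph_gmap[OF inj_sh] iso_gmap[OF inj_sh] by blast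
  have disj: "gmap (sh 0) ` X G1 \<inter> gmap (sh 1) ` X G2 = {}"
  proof (rule ccontr)
    assume "gmap (sh 0) ` X G1 \<inter> gmap (sh 1) ` X G2 \<noteq> {}"
    then obtain A B where AB: "A \<in> X G1" "B \<in> X G2" "gmap (sh 0) A = gmap (sh 1) B" by blast
    have "fst B \<noteq> {}" using AB(2) Hn iso_nonempty unfolding X_def by blast
    then obtain b where b: "b \<in> fst B" by blast
    hence "sh 1 b \<in> fst (gmap (sh 0) A)" using AB(3) by (simp add: gmap_def)
    then obtain a where "sh 1 b = sh 0 a" by (auto simp: gmap_def)
    thus False by (simp add: sh_def) presburger
  qed
  have "numsub H G1 + numsub H G2 = card (gmap (sh 0) ` X G1) + card (gmap (sh 1) ` X G2)"
    unfolding numsub_def X_def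
    using card_image[OF inj_on_subset[OF gmap_inj[OF inj_sh] subset_UNIV]] by metis
  also have "\<dots> = card (gmap (sh 0) ` X G1 \<union> gmap (sh 1) ` X G2)"
    using disj fin s1 s2 by (metis card_Un_disjoint rev_finite_subset)
  also have "\<dots> \<le> card (X (gunion G1 G2))" using s1 s2 fin by (intro card_mono) auto
  finally show ?thesis unfolding numsub_def X_def .
qed

lemma numsub_union_le:
  assumes G1: "wf_graph G1" and G2: "wf_graph G2" and C: "connected_graph F"
  shows "numsub F (gunion G1 G2) \<le> numsub F G1 + numsub F G2"
proof -
  define X where "X = (\<lambda>G. {S. subgraph S G \<and> graph_iso S F})"
  have f1: "finite (X G1)" "finite (X G2)" unfolding X_def using finite_numsub_set G1 G2 by auto
  have "X (gunion G1 G2) \<subseteq> gmap (sh 0) ` X G1 \<union> gmap (sh 1) ` X G2"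
    unfolding X_def using side[OF G1 G2 _ _ C] by blast
  hence "card (X (gunion G1 G2)) \<le> card (gmap (sh 0) ` X G1 \<union> gmap (sh 1) ` X G2)"
    using f1 by (intro card_mono) auto
  also have "\<dots> \<le> card (gmap (sh 0) ` X G1) + card (gmap (sh 1) ` X G2)" by (rule card_Un_le)
  also have "\<dots> \<le> card (X G1) + card (X G2)" by (intro add_mono card_image_le f1)
  finally show ?thesis unfolding numsub_def X_def .
qed


lemma wf_complete: "wf_graph (complete u)"
  by (auto simp: wf_graph_def complete_def)

lemma connected_complete: "u \<ge> 1 \<Longrightarrow> connected_graph (complete u)"
  unfolding connected_graph_def
proof (intro conjI ballI)
  assume "u \<ge> 1"
  thus "fst (complete u) \<noteq> {}" by (auto simp: complete_def)
  show "wf_graph (complete u)" by (rule wf_complete)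
  fix x y assume xy: "x \<in> fst (complete u)" "y \<in> fst (complete u)"
  show "(adj (complete u))\<^sup>*\<^sup>* x y"
  proof (cases "x = y")
    case False
    hence "{x, y} \<in> snd (complete u)" using xy by (auto simp: complete_def card_insert_if)
    thus ?thesis by auto
  qed simp
qed

lemma kcount_complete: assumes u: "u \<ge> 1" shows "kcount u (complete u) = 1"
proof -
  let ?K = "complete u"
  have "{S. subgraph S ?K \<and> graph_iso S ?K} = {?K}"
  proof (intro equalityI subsetI)
    fix S assume "S \<in> {S. subgraph S ?K \<and> graph_iso S ?K}"
    hence sub: "subgraph S ?K" and iso: "graph_iso S ?K" by auto
    obtain f where b: "bij_betw f (fst S) {0..<u}" and
      e: "\<forall>x\<in>fst S. \<forall>y\<in>fst S. {x, y} \<in> snd S \<longleftrightarrow> {f x, f y} \<in> snd ?K"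
      using iso unfolding graph_iso_def by (auto simp: complete_def)
    have vs: "fst S \<subseteq> {0..<u}" using sub by (simp add: subgraph_def complete_def)
    have "card (fst S) = u" using bij_betw_same_card[OF b] by simp
    hence v: "fst S = {0..<u}" using vs by (simp add: card_subset_eq)
    have "snd S = snd ?K"
    proof (intro equalityI subsetI)
      fix e assume "e \<in> snd S" thus "e \<in> snd ?K" using sub by (auto simp: subgraph_def)
    next
      fix e assume e2: "e \<in> snd ?K"
      hence "e \<subseteq> {0..<u}" "card e = 2" by (auto simp: complete_def)
      then obtain x y where xy: "e = {x, y}" "x \<noteq> y" by (meson card_2_iff)
      hence xy2: "x \<in> fst S" "y \<in> fst S" using \<open>e \<subseteq> {0..<u}\<close> v by auto
      have "f x \<noteq> f y" using b xy2 xy(2) by (metis bij_betw_iff_bijections)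
      moreover have "f x \<in> {0..<u}" "f y \<in> {0..<u}" using b xy2 by (auto simp: bij_betw_def)
      ultimately have "{f x, f y} \<in> snd ?K" by (auto simp: complete_def card_insert_if)
      thus "e \<in> snd S" using e xy xy2 by blast
    qed
    thus "S \<in> {?K}" using v by (simp add: prod_eq_iff complete_def)
  next
    fix S assume "S \<in> {?K}"
    hence S: "S = ?K" by simp
    have "graph_iso ?K ?K" unfolding graph_iso_def by (rule exI[of _ id]) auto
    thus "S \<in> {S. subgraph S ?K \<and> graph_iso S ?K}" using S wf_complete
      by (simp add: subgraph_def)
  qed
  thus ?thesis by (simp add: kcount_def numsub_def)
qed

lemma wf_empty: "wf_graph ({}, {})" by (simp add: wf_graph_def)

lemma numsub_empty: "fst F \<noteq> {} \<Longrightarrow> numsub F ({}, {}) = 0"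
proof -
  assume "fst F \<noteq> {}"
  hence "{S. subgraph S ({}, {}) \<and> graph_iso S F} = {}"
  proof -
    have "\<not> graph_iso ({}, {}) F" using iso_nonempty[of "({}, {})" F] \<open>fst F \<noteq> {}\<close> by auto
    moreover have "\<And>S. subgraph S ({}, {}) \<Longrightarrow> S = ({}, {})" by (auto simp: subgraph_def prod_eq_iff)
    ultimately show ?thesis by blast
  qed
  thus ?thesis unfolding numsub_def by (metis card.empty)
qed

lemma wf_copies: "wf_graph G \<Longrightarrow> wf_graph (copies q G)"
  by (induction q) (auto simp: wf_empty wf_gunion)

lemma numsub_copies_ge: "wf_graph G \<Longrightarrow> fst H \<noteq> {} \<Longrightarrow> q * numsub H G \<le> numsub H (copies q G)"
proof (induction q)
  case (Suc q)
  have "Suc q * numsub H G = numsub H G + q * numsub H G" by simp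
  also have "\<dots> \<le> numsub H G + numsub H (copies q G)" using Suc by simp
  also have "\<dots> \<le> numsub H (copies (Suc q) G)"
    using numsub_union_ge[OF Suc.prems(1) wf_copies[OF Suc.prems(1)] Suc.prems(2)] by simp
  finally show ?case .
qed simp

lemma numsub_copies_le: "wf_graph G \<Longrightarrow> connected_graph F \<Longrightarrow> numsub F (copies q G) \<le> q * numsub F G"
proof (induction q)
  case 0 thus ?case using numsub_empty by (simp add: connected_graph_def)
next
  case (Suc q)
  have "numsub F (copies (Suc q) G) \<le> numsub F G + numsub F (copies q G)"
    using numsub_union_le[OF Suc.prems(1) wf_copies[OF Suc.prems(1)] Suc.prems(2)] by simp
  also have "\<dots> \<le> numsub F G + q * numsub F G" using Suc by simp
  finally show ?case by simp
qed



definition valid :: "nat \<Rightarrow> graph set \<Rightarrow> nat \<Rightarrow> graph \<Rightarrow> bool" where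
  "valid u \<F> p G \<longleftrightarrow> wf_graph G \<and> free \<F> G \<and> kcount u G = p"

lemma ex_ge: "valid u \<F> p G \<Longrightarrow> enat (numsub H G) \<le> ex_u u p H \<F>"
  unfolding ex_u_def valid_def by (rule Sup_upper) blast

lemma ex_le: "(\<And>G. valid u \<F> p G \<Longrightarrow> numsub H G \<le> B) \<Longrightarrow> ex_u u p H \<F> \<le> enat B"
  unfolding ex_u_def valid_def by (rule Sup_least) auto

locale setting =
  fixes u :: nat and \<F> :: "graph set"
  assumes u: "u \<ge> 1" and F: "\<forall>F\<in>\<F>. connected_graph F \<and> numsub F (complete u) = 0"
begin

lemma complete_ne: "fst (complete u) \<noteq> {}"
  using connected_complete[OF u] by (simp add: connected_graph_def)

lemma free_gunion:
  assumes "wf_graph G1" "wf_graph G2" "free \<F> G1" "free \<F> G2" shows "free \<F> (gunion G1 G2)"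
  unfolding free_def
proof
  fix X assume X: "X \<in> \<F>"
  have "numsub X (gunion G1 G2) \<le> numsub X G1 + numsub X G2"
    using numsub_union_le[OF assms(1,2)] F X by blast
  moreover have "numsub X G1 = 0" "numsub X G2 = 0" using assms(3,4) X by (auto simp: free_def)
  ultimately show "numsub X (gunion G1 G2) = 0" by simp
qed

lemma free_copies:
  assumes "wf_graph G" "free \<F> G" shows "free \<F> (copies q G)"
  unfolding free_def
proof
  fix X assume X: "X \<in> \<F>"
  have "numsub X (copies q G) \<le> q * numsub X G"
    using numsub_copies_le[OF assms(1)] F X by blast
  moreover have "numsub X G = 0" using assms(2) X by (auto simp: free_def)
  ultimately show "numsub X (copies q G) = 0" by simp
qed

lemma kcount_gunion:
  assumes "wf_graph G1" "wf_graph G2" shows "kcount u (gunion G1 G2) = kcount u G1 + kcount u G2"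
proof -
  have "numsub (complete u) (gunion G1 G2) \<le> numsub (complete u) G1 + numsub (complete u) G2"
    by (rule numsub_union_le[OF assms connected_complete[OF u]])
  moreover have "numsub (complete u) G1 + numsub (complete u) G2 \<le> numsub (complete u) (gunion G1 G2)"
    by (rule numsub_union_ge[OF assms complete_ne])
  ultimately show ?thesis unfolding kcount_def by (rule antisym)
qed

lemma kcount_copies:
  assumes "wf_graph G" shows "kcount u (copies q G) = q * kcount u G"
proof -
  have "numsub (complete u) (copies q G) \<le> q * numsub (complete u) G"
    by (rule numsub_copies_le[OF assms connected_complete[OF u]])
  moreover have "q * numsub (complete u) G \<le> numsub (complete u) (copies q G)"
    by (rule numsub_copies_ge[OF assms complete_ne])
  ultimately show ?thesis unfolding kcount_def by (rule antisym)
qed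

lemma free_complete: "free \<F> (complete u)"
  using F by (simp add: free_def)

definition W :: "nat \<Rightarrow> graph \<Rightarrow> nat \<Rightarrow> graph" where
  "W m G r = gunion (copies m G) (copies r (complete u))"

lemma W_valid: "valid u \<F> p0 G \<Longrightarrow> valid u \<F> (m * p0 + r) (W m G r)"
  unfolding valid_def W_def
  using wf_copies wf_complete free_copies free_complete kcount_copies kcount_complete[OF u]
  by (simp add: wf_gunion free_gunion kcount_gunion)

lemma W_numsub: assumes G: "wf_graph G" and Hn: "fst H \<noteq> {}" shows "m * numsub H G \<le> numsub H (W m G r)"
proof -
  have "numsub H (copies m G) \<le> numsub H (W m G r)"
    using numsub_union_ge[OF wf_copies[OF G] wf_copies[OF wf_complete] Hn, of m r u] unfolding W_def by simp
  thus ?thesis using numsub_copies_ge[OF G Hn, of m] by simp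
qed

lemma valid_exists: "\<exists>G. valid u \<F> p G"
proof -
  have f: "free \<F> ({}, {})" unfolding free_def
  proof
    fix X assume "X \<in> \<F>"
    hence "fst X \<noteq> {}" using F by (simp add: connected_graph_def)
    thus "numsub X ({}, {}) = 0" by (rule numsub_empty)
  qed
  have "kcount u ({}, {}) = 0" unfolding kcount_def by (rule numsub_empty[OF complete_ne])
  hence "valid u \<F> 0 ({}, {})" using f wf_empty by (simp add: valid_def)
  hence "valid u \<F> (0 * 0 + p) (W 0 ({}, {}) p)" by (rule W_valid)
  hence "valid u \<F> p (W 0 ({}, {}) p)" by simp
  thus ?thesis by blast
qed

end


lemma divmod_real: "real (p div k) * real k + real (p mod k) = real p"
proof -
  have "real (p div k * k + p mod k) = real p" by simp
  thus ?thesis by (simp only: of_nat_add of_nat_mult)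
qed

context setting begin

lemma s_lower:
  assumes Hn: "fst H \<noteq> {}" and V: "valid u \<F> p0 G0" and p: "p \<ge> 1"
  shows "ereal (real (p div p0 * numsub H G0) / real p) \<le> ereal_of_enat (ex_u u p H \<F>) / ereal (real p)"
proof -
  have G0: "wf_graph G0" using V by (simp add: valid_def)
  have "valid u \<F> (p div p0 * p0 + p mod p0) (W (p div p0) G0 (p mod p0))" by (rule W_valid[OF V])
  hence "valid u \<F> p (W (p div p0) G0 (p mod p0))" by simp
  hence A: "enat (numsub H (W (p div p0) G0 (p mod p0))) \<le> ex_u u p H \<F>" by (rule ex_ge)
  have "p div p0 * numsub H G0 \<le> numsub H (W (p div p0) G0 (p mod p0))" by (rule W_numsub[OF G0 Hn])
  hence "enat (p div p0 * numsub H G0) \<le> enat (numsub H (W (p div p0) G0 (p mod p0)))" by simp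
  hence "enat (p div p0 * numsub H G0) \<le> ex_u u p H \<F>" using A by (rule order_trans)
  hence "ereal_of_enat (enat (p div p0 * numsub H G0)) \<le> ereal_of_enat (ex_u u p H \<F>)"
    by (simp only: ereal_of_enat_le_iff)
  hence "ereal (real (p div p0 * numsub H G0)) \<le> ereal_of_enat (ex_u u p H \<F>)"
    by (simp only: ereal_of_enat_simps(1))
  hence "ereal (real (p div p0 * numsub H G0)) / ereal (real p) \<le> ereal_of_enat (ex_u u p H \<F>) / ereal (real p)"
    using p by (intro ereal_divide_right_mono) auto
  thus ?thesis using p by simp
qed

lemma conv:
  assumes Hn: "fst H \<noteq> {}"
  shows "(\<lambda>p. ereal_of_enat (ex_u u p H \<F>) / ereal (real p)) \<longlonglongrightarrow>
         (SUP p\<in>{1..}. ereal_of_enat (ex_u u p H \<F>) / ereal (real p))"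
    (is "?s \<longlonglongrightarrow> ?S")
proof (rule order_tendstoI)
  fix a assume "?S < a"
  moreover have "\<forall>\<^sub>F p in sequentially. ?s p \<le> ?S"
    using eventually_ge_at_top[of 1] by eventually_elim (auto intro: SUP_upper)
  ultimately show "\<forall>\<^sub>F p in sequentially. ?s p < a" by (auto elim: eventually_mono)
next
  fix a assume aS: "a < ?S"
  then obtain p0 where p0: "p0 \<ge> 1" "a < ?s p0" by (auto simp: less_SUP_iff)
  have "\<exists>G. valid u \<F> p0 G \<and> a < ereal (real (numsub H G) / real p0)"
  proof (rule ccontr)
    assume nt: "\<not> ?thesis"
    hence all: "\<And>G. valid u \<F> p0 G \<Longrightarrow> ereal (real (numsub H G) / real p0) \<le> a"
      using nt not_less by blast
    obtain G1 where "valid u \<F> p0 G1" using valid_exists by blast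
    hence "ereal (real (numsub H G1) / real p0) \<le> a" by (rule all)
    moreover have "ereal 0 \<le> ereal (real (numsub H G1) / real p0)" by simp
    ultimately have a0: "ereal 0 \<le> a" by (rule order_trans[rotated])
    moreover have "a \<noteq> \<infinity>" using aS by auto
    ultimately obtain r where r: "a = ereal r" "r \<ge> 0"
      by (cases a) auto
    define B where "B = nat \<lfloor>r * real p0\<rfloor>"
    have "\<And>G. valid u \<F> p0 G \<Longrightarrow> numsub H G \<le> B"
    proof -
      fix G assume "valid u \<F> p0 G"
      hence "real (numsub H G) / real p0 \<le> r" using all r by auto
      hence "real (numsub H G) \<le> r * real p0" using p0 by (simp add: divide_le_eq)
      thus "numsub H G \<le> B" unfolding B_def by linarith
    qed
    hence "ex_u u p0 H \<F> \<le> enat B" by (rule ex_le)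
    hence "?s p0 \<le> ereal (real B) / ereal (real p0)"
      using p0 by (intro ereal_divide_right_mono) (auto simp: ereal_of_enat_le_iff[symmetric])
    also have "\<dots> = ereal (real B / real p0)" using p0 by simp
    also have "\<dots> \<le> ereal r"
      using p0 r unfolding B_def by (simp add: divide_le_eq)
    finally show False using p0 r by simp
  qed
  then obtain G0 where G0: "valid u \<F> p0 G0" "a < ereal (real (numsub H G0) / real p0)" by blast
  define n0 where "n0 = numsub H G0"
  have ev: "\<forall>\<^sub>F p in sequentially. a < ereal (real (p div p0 * n0) / real p)"
  proof (cases a)
    case (real r)
    hence rl: "r < real n0 / real p0" using G0 n0_def by simp
    define \<delta> where "\<delta> = real n0 / real p0 - r"
    have d: "\<delta> > 0" using rl \<delta>_def by simp
    define P where "P = max p0 (nat \<lceil>real n0 / \<delta>\<rceil> + 1)"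
    show ?thesis using eventually_ge_at_top[of P]
    proof eventually_elim
      case (elim p)
      have pp: "p \<ge> p0" "real p > real n0 / \<delta>" using elim unfolding P_def by linarith+
      have ppos: "real p > 0" using pp p0 by simp
      have "real n0 / real p < \<delta>" using pp d ppos by (simp add: divide_less_eq mult.commute)
      have "p mod p0 < p0" using p0 by simp
      hence "real (p mod p0) < real p0" by simp
      hence mm: "real (p div p0) * real p0 \<ge> real p - real p0"
        using divmod_real[of p p0] by linarith
      have "r = real n0 / real p0 - \<delta>" using \<delta>_def by simp
      also have "\<dots> < real n0 / real p0 - real n0 / real p" using \<open>real n0 / real p < \<delta>\<close> by simp
      also have "\<dots> = (real p - real p0) * real n0 / (real p0 * real p)"
        using p0 ppos by (simp add: field_simps)
      also have "\<dots> \<le> real (p div p0) * real p0 * real n0 / (real p0 * real p)"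
        using mm p0 ppos by (intro divide_right_mono mult_right_mono) auto
      also have "\<dots> = real (p div p0 * n0) / real p" using p0 by simp
      finally show ?case using real by simp
    qed
  next
    case MInf thus ?thesis by simp
  next
    case PInf thus ?thesis using aS by simp
  qed
  show "\<forall>\<^sub>F p in sequentially. a < ?s p"
    using ev eventually_ge_at_top[of 1]
  proof eventually_elim
    case (elim p)
    have "a < ereal (real (p div p0 * numsub H G0) / real p)" using elim(1) n0_def by simp
    thus ?case using s_lower[OF Hn G0(1) elim(2)] by (rule less_le_trans)
  qed
qed

end


context setting begin

lemma main:
  fixes H L :: graph
  assumes H: "wf_graph H" and HK: "numsub (complete u) H \<ge> 1"
    and L: "wf_graph L" "free \<F> L" "kcount u L \<ge> 1" "numsub H L \<ge> 1"
    and rhoL: "ereal (rho u H L) = P_u u H \<F>"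
  shows "((\<lambda>p. ereal_of_enat (ex_u u p H \<F>) /
            ereal (real (numsub H (mixed (p div kcount u L) L (p mod kcount u L) u))))
          \<longlonglongrightarrow> 1) \<and>
         ((\<lambda>p. ereal_of_enat (ex_u u p H \<F>) /
            ereal (real (numsub H L) / real (kcount u L) * real p)) \<longlonglongrightarrow> 1) \<and>
         (\<forall>p. p \<ge> 1 \<longrightarrow> kcount u L dvd p \<longrightarrow>
            ex_u u p H \<F> = enat (numsub H (copies (p div kcount u L) L)))"
proof -
  define k where "k = kcount u L"
  define N where "N = numsub H L"
  define \<rho> where "\<rho> = real N / real k"
  have k1: "k \<ge> 1" and N1: "N \<ge> 1" using L k_def N_def by auto
  have rho: "rho u H L = \<rho>" by (simp add: rho_def \<rho>_def N_def k_def)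
  have rpos: "\<rho> > 0" using k1 N1 \<rho>_def by simp
  have rk: "\<rho> * real k = real N" using k1 \<rho>_def by simp
  have Hn: "fst H \<noteq> {}"
  proof -
    have "{S. subgraph S H \<and> graph_iso S (complete u)} \<noteq> {}"
      using HK unfolding numsub_def by (intro notI) simp
    then obtain S where S: "subgraph S H" "graph_iso S (complete u)" by blast
    have "fst S \<noteq> {}" using iso_nonempty[OF S(2)] connected_complete[OF u]
      by (simp add: connected_graph_def)
    thus ?thesis using S(1) by (auto simp: subgraph_def)
  qed
  let ?s = "\<lambda>p. ereal_of_enat (ex_u u p H \<F>) / ereal (real p)"
  let ?S = "SUP p\<in>{1..}. ?s p"
  have "lim ?s = ?S" by (rule limI[OF conv[OF Hn]])
  hence rS: "ereal \<rho> = ?S" using rhoL rho by (simp add: P_u_def)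
  have KEY: "real (numsub H G) \<le> \<rho> * real p" if p: "p \<ge> 1" and V: "valid u \<F> p G" for p G
  proof -
    have "ereal (real (p div p * numsub H G) / real p) \<le> ?s p" by (rule s_lower[OF Hn V p])
    also have "\<dots> \<le> ?S" using p by (intro SUP_upper) auto
    finally have A: "ereal (real (p div p * numsub H G) / real p) \<le> ereal \<rho>" using rS by simp
    have "p div p = 1" using p by simp
    hence "real (numsub H G) / real p \<le> \<rho>" using A by simp
    thus ?thesis using p by (simp add: divide_le_eq mult.commute)
  qed
  have EXF: "\<exists>e. ex_u u p H \<F> = enat e \<and> real e \<le> \<rho> * real p" if p: "p \<ge> 1" for p
  proof -
    define B where "B = nat \<lfloor>\<rho> * real p\<rfloor>"
    have "ex_u u p H \<F> \<le> enat B"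
    proof (rule ex_le)
      fix G assume "valid u \<F> p G"
      hence "real (numsub H G) \<le> \<rho> * real p" by (rule KEY[OF p])
      thus "numsub H G \<le> B" unfolding B_def by linarith
    qed
    then obtain e where e: "ex_u u p H \<F> = enat e" "e \<le> B" by (cases "ex_u u p H \<F>") auto
    have x0: "\<rho> * real p \<ge> 0" using rpos by simp
    have "real e \<le> real (nat \<lfloor>\<rho> * real p\<rfloor>)" using e(2) unfolding B_def by simp
    also have "\<dots> = real_of_int \<lfloor>\<rho> * real p\<rfloor>" using x0 by simp
    also have "\<dots> \<le> \<rho> * real p" by (rule of_int_floor_le)
    finally have "real e \<le> \<rho> * real p" .
    thus ?thesis using e by blast
  qed
  have VL: "valid u \<F> k L" using L k_def by (simp add: valid_def)
  have Mval: "valid u \<F> p (mixed (p div k) L (p mod k) u)" for p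
    using W_valid[OF VL, of "p div k" "p mod k"] by (simp add: mixed_def W_def)
  have Mnum: "p div k * N \<le> numsub H (mixed (p div k) L (p mod k) u)" for p
    using W_numsub[OF L(1) Hn, of "p div k" "p mod k"] by (simp add: mixed_def W_def N_def)
  define e where "e = (\<lambda>p. the_enat (ex_u u p H \<F>))"
  define M where "M = (\<lambda>p. numsub H (mixed (p div k) L (p mod k) u))"
  have eprops: "ex_u u p H \<F> = enat (e p) \<and> real (e p) \<le> \<rho> * real p \<and> M p \<le> e p \<and> p div k * N \<le> M p"
    if p: "p \<ge> 1" for p
  proof -
    obtain e0 where e0: "ex_u u p H \<F> = enat e0" "real e0 \<le> \<rho> * real p" using EXF[OF p] by blast
    have "enat (M p) \<le> ex_u u p H \<F>" unfolding M_def by (rule ex_ge[OF Mval])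
    thus ?thesis using e0 Mnum[of p] unfolding e_def M_def by simp
  qed
  have qk: "real (p div k) * real k > real p - real k" for p
  proof -
    have "p mod k < k" using k1 by simp
    hence "real (p mod k) < real k" by simp
    thus ?thesis using divmod_real[of p k] by linarith
  qed
  have C3: "\<forall>p. p \<ge> 1 \<longrightarrow> k dvd p \<longrightarrow> ex_u u p H \<F> = enat (numsub H (copies (p div k) L))"
  proof (intro allI impI)
    fix p assume p: "p \<ge> 1" and d: "k dvd p"
    define q where "q = p div k"
    have pq: "p = q * k" using d q_def by simp
    have Vc: "valid u \<F> p (copies q L)"
      using wf_copies[OF L(1)] free_copies[OF L(1) L(2)] kcount_copies[OF L(1)] pq k_def
      by (simp add: valid_def)
    have c1: "enat (numsub H (copies q L)) \<le> ex_u u p H \<F>" by (rule ex_ge[OF Vc])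
    have c2: "ex_u u p H \<F> \<le> enat (q * N)"
    proof (rule ex_le)
      fix G assume "valid u \<F> p G"
      hence "real (numsub H G) \<le> \<rho> * real p" by (rule KEY[OF p])
      also have "\<dots> = real (q * N)" using pq rk by (simp add: algebra_simps)
      finally show "numsub H G \<le> q * N" by linarith
    qed
    have c3: "q * N \<le> numsub H (copies q L)" using numsub_copies_ge[OF L(1) Hn] N_def by simp
    show "ex_u u p H \<F> = enat (numsub H (copies (p div k) L))"
    proof -
      have "enat (numsub H (copies q L)) \<le> enat (q * N)" by (rule order_trans[OF c1 c2])
      hence "numsub H (copies q L) = q * N" using c3 by simp
      hence "ex_u u p H \<F> = enat (numsub H (copies q L))" using c1 c2 by (simp add: antisym)
      thus ?thesis unfolding q_def .
    qed
  qed
  have C2: "(\<lambda>p. ereal_of_enat (ex_u u p H \<F>) / ereal (real N / real k * real p)) \<longlonglongrightarrow> 1"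
  proof -
    let ?g = "\<lambda>p. real (e p) / (\<rho> * real p)"
    have lo: "\<forall>\<^sub>F p in sequentially. 1 - real k / real p \<le> ?g p"
      using eventually_ge_at_top[of 1]
    proof eventually_elim
      case (elim p)
      note ep = eprops[OF elim]
      have pp: "real p > 0" using elim by simp
      have "real (p div k * N) \<le> real (e p)" using ep by linarith
      hence "real (p div k) * real N \<le> real (e p)" by simp
      hence "real (p div k) * (\<rho> * real k) \<le> real (e p)" using rk by simp
      moreover have "\<rho> * (real p - real k) \<le> \<rho> * (real (p div k) * real k)"
        using qk[of p] rpos by (intro mult_left_mono) auto
      hence "\<rho> * (real p - real k) \<le> real (p div k) * (\<rho> * real k)" by (simp add: algebra_simps)
      ultimately have "\<rho> * (real p - real k) \<le> real (e p)" by linarith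
      hence "(\<rho> * (real p - real k)) / (\<rho> * real p) \<le> ?g p"
        using pp rpos by (intro divide_right_mono) auto
      moreover have "(\<rho> * (real p - real k)) / (\<rho> * real p) = 1 - real k / real p"
        using pp rpos by (simp add: field_simps)
      ultimately show ?case by simp
    qed
    have hi: "\<forall>\<^sub>F p in sequentially. ?g p \<le> 1"
      using eventually_ge_at_top[of 1]
    proof eventually_elim
      case (elim p)
      have pp: "\<rho> * real p > 0" using elim rpos by simp
      thus ?case using eprops[OF elim] by (simp add: divide_le_eq)
    qed
    have "(\<lambda>p. 1 - real k / real p) \<longlonglongrightarrow> 1 - 0"
      by (intro tendsto_diff tendsto_const lim_const_over_n)
    hence gl: "?g \<longlonglongrightarrow> 1" using tendsto_sandwich[OF lo hi] by simp
    hence "(\<lambda>p. ereal (?g p)) \<longlonglongrightarrow> ereal 1" by (rule tendsto_ereal)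
    moreover have "\<forall>\<^sub>F p in sequentially. ereal (?g p) = ereal_of_enat (ex_u u p H \<F>) / ereal (real N / real k * real p)"
      using eventually_ge_at_top[of 1]
    proof eventually_elim
      case (elim p)
      have pp: "\<rho> * real p > 0" using elim rpos by simp
      have X: "ereal_of_enat (ex_u u p H \<F>) = ereal (real (e p))" using eprops[OF elim] by simp
      have Y: "real N / real k * real p = \<rho> * real p" by (simp add: \<rho>_def)
      have Z: "ereal (real (e p)) / ereal (\<rho> * real p) = ereal (real (e p) / (\<rho> * real p))"
      proof -
        have ne: "\<rho> * real p \<noteq> 0" by (rule not_sym[OF less_imp_neq[OF pp]])
        show ?thesis by (simp only: ereal_divide if_not_P[OF ne])
      qed
      show ?case unfolding X Y Z by (rule refl)
    qed
    ultimately have "(\<lambda>p. ereal_of_enat (ex_u u p H \<F>) / ereal (real N / real k * real p)) \<longlonglongrightarrow> ereal 1"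
      by (rule Lim_transform_eventually)
    thus ?thesis by (simp add: one_ereal_def)
  qed
  have C1: "(\<lambda>p. ereal_of_enat (ex_u u p H \<F>) / ereal (real (M p))) \<longlonglongrightarrow> 1"
  proof -
    let ?g = "\<lambda>p. real (e p) / real (M p)"
    have Mpos: "real (M p) \<ge> real (p div k) * real N" "p div k \<ge> 2" "M p \<ge> 2" if p: "p \<ge> 2 * k" for p
    proof -
      have "2 * k div k \<le> p div k" using p by (rule div_le_mono)
      thus q2: "p div k \<ge> 2" using k1 by simp
      have p1: "p \<ge> 1" using p k1 by simp
      have "2 * 1 \<le> p div k * N" using q2 N1 by (rule mult_le_mono)
      thus "M p \<ge> 2" using eprops[OF p1] by linarith
      have "p div k * N \<le> M p" using eprops[OF p1] by simp
      hence "real (p div k * N) \<le> real (M p)" by (simp only: of_nat_le_iff)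
      thus "real (M p) \<ge> real (p div k) * real N" by (simp only: of_nat_mult)
    qed
    have lo: "\<forall>\<^sub>F p in sequentially. 1 \<le> ?g p"
      using eventually_ge_at_top[of "2 * k"]
    proof eventually_elim
      case (elim p)
      have p1: "p \<ge> 1" using elim k1 by simp
      have "real (M p) > 0" using Mpos(3)[OF elim] by simp
      thus ?case using eprops[OF p1] by simp
    qed
    have hi: "\<forall>\<^sub>F p in sequentially. ?g p \<le> 1 + 2 * real k / real p"
      using eventually_ge_at_top[of "2 * k"]
    proof eventually_elim
      case (elim p)
      have p1: "p \<ge> 1" using elim k1 by simp
      note ep = eprops[OF p1]
      define q where "q = real (p div k)"
      have q2: "q \<ge> 2" using Mpos(2)[OF elim] q_def by simp
      have Mq: "real (M p) \<ge> q * real N" using Mpos(1)[OF elim] q_def by simp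
      have Mp: "real (M p) > 0" using Mpos(3)[OF elim] by simp
      have pp: "real p \<ge> 2 * real k" using elim by linarith
      have qk2: "q * real k > real p - real k" using qk[of p] q_def by simp
      have "real (e p) \<le> \<rho> * real p" using ep by simp
      also have "\<dots> < \<rho> * (q * real k + real k)" using qk2 rpos by simp
      also have "\<dots> = (q + 1) * real N" using rk by (simp add: algebra_simps)
      finally have eN: "real (e p) < (q + 1) * real N" .
      have "?g p \<le> (q + 1) * real N / (q * real N)"
      proof -
        have "?g p \<le> (q + 1) * real N / real (M p)" using eN Mp by (simp add: divide_right_mono)
        also have "\<dots> \<le> (q + 1) * real N / (q * real N)"
          using Mq q2 N1 Mp by (intro divide_left_mono) auto
        finally show ?thesis .
      qed
      also have "\<dots> = 1 + 1 / q" using q2 N1 by (simp add: field_simps)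
      also have "\<dots> \<le> 1 + 2 * real k / real p"
      proof -
        have "real p \<le> 2 * (q * real k)" using qk2 pp by linarith
        hence "1 / q \<le> 2 * real k / real p" using q2 pp k1
          by (simp add: divide_simps) (simp add: algebra_simps)
        thus ?thesis by simp
      qed
      finally show ?case .
    qed
    have "(\<lambda>p. 1 + 2 * real k / real p) \<longlonglongrightarrow> 1 + 0"
      by (intro tendsto_add tendsto_const lim_const_over_n)
    hence gl: "?g \<longlonglongrightarrow> 1" using tendsto_sandwich[OF lo hi] by simp
    hence "(\<lambda>p. ereal (?g p)) \<longlonglongrightarrow> ereal 1" by (rule tendsto_ereal)
    moreover have "\<forall>\<^sub>F p in sequentially. ereal (?g p) = ereal_of_enat (ex_u u p H \<F>) / ereal (real (M p))"
      using eventually_ge_at_top[of "2 * k"]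
    proof eventually_elim
      case (elim p)
      have p1: "p \<ge> 1" using elim k1 by simp
      have "real (M p) \<noteq> 0" using Mpos(3)[OF elim] by simp
      moreover have X: "ereal_of_enat (ex_u u p H \<F>) = ereal (real (e p))" using eprops[OF p1] by simp
      ultimately have Z: "ereal (real (e p)) / ereal (real (M p)) = ereal (real (e p) / real (M p))"
        by (simp only: ereal_divide if_not_P if_False)
      show ?case unfolding X Z by (rule refl)
    qed
    ultimately have "(\<lambda>p. ereal_of_enat (ex_u u p H \<F>) / ereal (real (M p))) \<longlonglongrightarrow> ereal 1"
      by (rule Lim_transform_eventually)
    thus ?thesis by (simp add: one_ereal_def)
  qed
  show ?thesis using C1 C2 C3 unfolding M_def k_def N_def by simp
qed

end

theorem mainTheorem6:
  fixes u :: nat and H L :: graph and \<F> :: "graph set"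
  assumes u: "u \<ge> 1"
    and H: "wf_graph H" and HK: "numsub (complete u) H \<ge> 1"
    and F: "\<forall>F\<in>\<F>. connected_graph F \<and> numsub F (complete u) = 0"
    and L: "wf_graph L" "free \<F> L" "kcount u L \<ge> 1" "numsub H L \<ge> 1"
    and rhoL: "ereal (rho u H L) = P_u u H \<F>"
  shows "((\<lambda>p. ereal_of_enat (ex_u u p H \<F>) /
            ereal (real (numsub H (mixed (p div kcount u L) L (p mod kcount u L) u))))
          \<longlonglongrightarrow> 1) \<and>
         ((\<lambda>p. ereal_of_enat (ex_u u p H \<F>) /
            ereal (real (numsub H L) / real (kcount u L) * real p)) \<longlonglongrightarrow> 1) \<and>
         (\<forall>p. p \<ge> 1 \<longrightarrow> kcount u L dvd p \<longrightarrow>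
            ex_u u p H \<F> = enat (numsub H (copies (p div kcount u L) L)))"
proof -
  interpret setting u \<F> using u F by unfold_locales
  show ?thesis by (rule main[OF H HK L rhoL])
qed

end
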